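(* For $\nu\in\mathbb C$ and integers $m\ge0$, $0\le i\le\lfloor m/2\rfloor$, define $$a_i(\nu,m)=q^{-m(m+\nu)}q^{i(3i+\nu-1)}\frac{(-1)^i(q^{2\nu};q^2)_{m-i}(q^2;q^2)_{m-i}}{(q^2;q^2)_i(q^{2\nu};q^2)_i(q^2;q^2)_{m-2i}},$$ and for $m\ge1$, $0\le j\le\lfloor(m-1)/2\rfloor$, define $b_j(\nu,m)=-q^{2j-m-\nu}a_j(\nu+1,m-1)$ (i.e. $b_j(\nu,m+1)=-q^{2j-m-\nu-1}a_j(\nu+1,m)$). Then for every $\nu\in\mathbb C$ with $q^{2\nu+2i}\ne1$ for all integers $i\ge0$, every $m\ge0$ and every $x>0$, $$J_{\nu+m}(xq^m;q^2)=\sum_{i=0}^{\lfloor m/2\rfloor}\frac{a_i(\nu,m)}{x^{m-2i}}J_\nu(xq^i;q^2)+\sum_{j=0}^{\lfloor(m-1)/2\rfloor}\frac{b_j(\nu,m)}{x^{m-1-2j}}J_{\nu-1}(xq^j;q^2).$$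
   Context: Fix $0<q<1$; $(a;q)_0=1$, $(a;q)_k=\prod_{i=0}^{k-1}(1-aq^i)$, $(a;q)_\infty=\prod_{i\ge0}(1-aq^i)$. For $\nu\in\mathbb C$ and $x>0$ the Hahn–Exton $q$-Bessel function is $$J_\nu(x;q^2)=\frac{x^\nu}{(q^2;q^2)_\infty}\sum_{k=0}^\infty\frac{(-1)^kq^{k(k+1)}(q^{2\nu+2k+2};q^2)_\infty}{(q^2;q^2)_k}\,x^{2k}.$$ $\lfloor a\rfloor$ is the largest integer $\le a$; empty sums are zero. *)

theory Defs
  imports "HOL-Analysis.Analysis"
begin

definition qpoch :: "complex \<Rightarrow> complex \<Rightarrow> nat \<Rightarrow> complex" where
  "qpoch a b k = (\<Prod>i<k. (1 - a * b ^ i))"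

definition qpoch_inf :: "complex \<Rightarrow> complex \<Rightarrow> complex" where
  "qpoch_inf a b = lim (\<lambda>n. qpoch a b n)"

definition qpow :: "real \<Rightarrow> complex \<Rightarrow> complex" where
  "qpow q z = complex_of_real q powr z"

definition hahn_exton :: "real \<Rightarrow> complex \<Rightarrow> real \<Rightarrow> complex" where
  "hahn_exton q \<nu> x =
     complex_of_real x powr \<nu> / qpoch_inf (complex_of_real (q^2)) (complex_of_real (q^2)) *
     (\<Sum>k. (-1) ^ k * complex_of_real (q ^ (k * (k + 1))) *
            qpoch_inf (qpow q (2 * \<nu> + 2 * of_nat k + 2)) (complex_of_real (q^2)) /
            qpoch (complex_of_real (q^2)) (complex_of_real (q^2)) k *
            complex_of_real (x ^ (2 * k)))"

definition coef_a :: "real \<Rightarrow> complex \<Rightarrow> nat \<Rightarrow> nat \<Rightarrow> complex" where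
  "coef_a q \<nu> m i =
     qpow q (- (of_nat m * (of_nat m + \<nu>))) *
     qpow q (of_nat i * (3 * of_nat i + \<nu> - 1)) *
     ((-1) ^ i * qpoch (qpow q (2 * \<nu>)) (complex_of_real (q^2)) (m - i) *
        qpoch (complex_of_real (q^2)) (complex_of_real (q^2)) (m - i)) /
     (qpoch (complex_of_real (q^2)) (complex_of_real (q^2)) i *
        qpoch (qpow q (2 * \<nu>)) (complex_of_real (q^2)) i *
        qpoch (complex_of_real (q^2)) (complex_of_real (q^2)) (m - 2 * i))"

definition coef_b :: "real \<Rightarrow> complex \<Rightarrow> nat \<Rightarrow> nat \<Rightarrow> complex" where
  "coef_b q \<nu> m j = - qpow q (2 * of_nat j - of_nat m - \<nu>) * coef_a q (\<nu> + 1) (m - 1) j"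

end

theory Submission
  imports Defs
begin

lemma cpow_pos: "0 < x \<Longrightarrow> complex_of_real x powr z = exp (z * of_real (ln x))"
  by (simp add: powr_def Ln_of_real)

lemma qpoch_Suc: "qpoch a b (Suc n) = qpoch a b n * (1 - a * b ^ n)"
  by (simp add: qpoch_def)

lemma qpoch_shift: "qpoch a b (Suc n) = (1 - a) * qpoch (a * b) b n"
  unfolding qpoch_def by (subst prod.lessThan_Suc_shift) (simp add: mult.assoc)

lemma qpoch_conv:
  assumes "norm b < 1"
  shows "(\<lambda>n. qpoch a b n) \<longlonglongrightarrow> qpoch_inf a b"
proof -
  have "summable (\<lambda>i. norm ((1 - a * b ^ i) - 1))"
    using assms by (simp add: norm_mult norm_power summable_geometric)
  then have "abs_convergent_prod (\<lambda>i. 1 - a * b ^ i)"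
    by (rule summable_imp_abs_convergent_prod)
  then have "convergent_prod (\<lambda>i. 1 - a * b ^ i)"
    by (rule abs_convergent_prod_imp_convergent_prod)
  then have "(\<lambda>n. \<Prod>i\<le>n. 1 - a * b ^ i) \<longlonglongrightarrow> prodinf (\<lambda>i. 1 - a * b ^ i)"
    by (rule convergent_prod_LIMSEQ)
  then have "(\<lambda>n. qpoch a b (Suc n)) \<longlonglongrightarrow> prodinf (\<lambda>i. 1 - a * b ^ i)"
    by (simp add: qpoch_def lessThan_Suc_atMost)
  then have L: "(\<lambda>n. qpoch a b n) \<longlonglongrightarrow> prodinf (\<lambda>i. 1 - a * b ^ i)"
    by (rule LIMSEQ_imp_Suc)
  then show ?thesis unfolding qpoch_inf_def by (simp add: limI)
qed

lemma qpoch_inf_rec: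
  assumes "norm b < 1"
  shows "qpoch_inf a b = (1 - a) * qpoch_inf (a * b) b"
proof -
  have "(\<lambda>n. (1 - a) * qpoch (a * b) b n) \<longlonglongrightarrow> (1 - a) * qpoch_inf (a * b) b"
    by (intro tendsto_mult tendsto_const qpoch_conv assms)
  then have "(\<lambda>n. qpoch a b (Suc n)) \<longlonglongrightarrow> (1 - a) * qpoch_inf (a * b) b"
    by (simp add: qpoch_shift)
  then have "(\<lambda>n. qpoch a b n) \<longlonglongrightarrow> (1 - a) * qpoch_inf (a * b) b"
    by (rule LIMSEQ_imp_Suc)
  moreover have "(\<lambda>n. qpoch a b n) \<longlonglongrightarrow> qpoch_inf a b" by (rule qpoch_conv[OF assms])
  ultimately show ?thesis using LIMSEQ_unique by blast
qed

lemma qpow_exp: "0 < q \<Longrightarrow> qpow q z = exp (z * of_real (ln q))"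
  by (simp add: qpow_def cpow_pos)

lemma qpow_add: "0 < q \<Longrightarrow> qpow q (a + b) = qpow q a * qpow q b"
  by (simp add: qpow_exp distrib_right exp_add)

lemma qpow_nat: "0 < q \<Longrightarrow> qpow q (of_nat n) = complex_of_real (q ^ n)"
  by (simp add: qpow_def powr_nat)

lemma norm_qpow: "0 < q \<Longrightarrow> norm (qpow q z) = q powr Re z"
  by (simp add: qpow_def norm_powr_real_powr)

definition hterm :: "real \<Rightarrow> complex \<Rightarrow> real \<Rightarrow> nat \<Rightarrow> complex" where
  "hterm q \<nu> x = (\<lambda>k. (-1) ^ k * complex_of_real (q ^ (k * (k + 1))) *
            qpoch_inf (qpow q (2 * \<nu> + 2 * of_nat k + 2)) (complex_of_real (q^2)) /
            qpoch (complex_of_real (q^2)) (complex_of_real (q^2)) k *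
            complex_of_real (x ^ (2 * k)))"

lemma hahn_exton_hterm: "hahn_exton q \<nu> x =
   complex_of_real x powr \<nu> / qpoch_inf (complex_of_real (q^2)) (complex_of_real (q^2)) * suminf (hterm q \<nu> x)"
  unfolding hahn_exton_def hterm_def ..

lemma qpoch_Q_nonzero:
  assumes "0 < q" "q < 1"
  shows "qpoch (complex_of_real (q^2)) (complex_of_real (q^2)) k \<noteq> 0"
proof -
  have "\<And>i. (1::complex) - complex_of_real (q^2) * complex_of_real (q^2) ^ i \<noteq> 0"
  proof
    fix i assume "(1::complex) - complex_of_real (q^2) * complex_of_real (q^2) ^ i = 0"
    then have "(1::real) = q^2 * (q^2)^i"
      by (metis (mono_tags, lifting) eq_iff_diff_eq_0 of_real_eq_1_iff of_real_mult of_real_power)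
    moreover have "q^2 * (q^2)^i < 1"
      using assms power_Suc_less_one[of "q^2" i]
      by (simp add: abs_square_less_1)
    ultimately show False by simp
  qed
  then show ?thesis unfolding qpoch_def by (simp add: prod_zero_iff)
qed

lemma hterm_rec:
  assumes "0 < q" "q < 1"
  shows "hterm q \<nu> x (Suc k) * (1 - complex_of_real (q^2) ^ Suc k) * (1 - qpow q (2 * \<nu> + 2 * of_nat k + 2))
        = - complex_of_real (q ^ (2 * k + 2) * x ^ 2) * hterm q \<nu> x k"
proof -
  define Q where "Q = complex_of_real (q^2)"
  define w where "w = qpow q (2 * \<nu> + 2 * of_nat k + 2)"
  have w1: "qpow q (2 * \<nu> + 2 * of_nat (Suc k) + 2) = w * Q"
  proof -
    have "2 * \<nu> + 2 * of_nat (Suc k) + 2 = (2 * \<nu> + 2 * of_nat k + 2) + of_nat 2" by simp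
    then show ?thesis unfolding w_def Q_def using assms
      by (simp only: qpow_add qpow_nat)
  qed
  have nQ: "norm Q < 1" unfolding Q_def using assms by (simp add: norm_power abs_square_less_1)
  have P: "qpoch_inf w Q = (1 - w) * qpoch_inf (w * Q) Q" by (rule qpoch_inf_rec[OF nQ])
  have G: "qpoch Q Q (Suc k) = qpoch Q Q k * (1 - Q ^ Suc k)"
    by (simp add: qpoch_Suc)
  have Gnz: "qpoch Q Q k \<noteq> 0" "qpoch Q Q (Suc k) \<noteq> 0" unfolding Q_def using qpoch_Q_nonzero assms by auto
  then have G1: "1 - Q ^ Suc k \<noteq> 0" using G by auto
  have "Suc k * (Suc k + 1) = k * (k + 1) + (2 * k + 2)" by (simp add: algebra_simps)
  then have e1: "q ^ (Suc k * (Suc k + 1)) = q ^ (k * (k + 1)) * q ^ (2 * k + 2)"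
    by (simp only: power_add)
  have e2: "x ^ (2 * Suc k) = x ^ (2 * k) * x ^ 2"
    by (simp add: power_add[symmetric] algebra_simps)
  show ?thesis
    unfolding hterm_def w1[unfolded w_def Q_def] Q_def[symmetric] w_def[symmetric]
    using Gnz G1 unfolding G P e1 e2
    by (simp add: field_simps)
qed

lemma hterm_summable:
  assumes q: "0 < q" "q < 1"
  shows "summable (hterm q \<nu> x)"
proof -
  define Q where "Q = complex_of_real (q^2)"
  define w where "w = (\<lambda>k::nat. qpow q (2 * \<nu> + 2 * of_nat k + 2))"
  have q2: "q^2 < 1" using q by (simp add: abs_square_less_1)
  have wk: "w k = qpow q (2 * \<nu> + 2) * Q ^ k" for k
  proof -
    have "2 * \<nu> + 2 * of_nat k + 2 = (2 * \<nu> + 2) + of_nat (2 * k)" by simp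
    then show ?thesis unfolding w_def Q_def using q
      by (simp only: qpow_add qpow_nat power_mult of_real_power)
  qed
  have nQ: "norm Q < 1" unfolding Q_def using q2 q by (simp add: norm_power abs_square_less_1)
  have "(\<lambda>k. qpow q (2 * \<nu> + 2) * Q ^ k) \<longlonglongrightarrow> qpow q (2 * \<nu> + 2) * 0"
    by (intro tendsto_mult tendsto_const LIMSEQ_power_zero nQ)
  moreover have "w = (\<lambda>k. qpow q (2 * \<nu> + 2) * Q ^ k)" using wk by auto
  ultimately have "w \<longlonglongrightarrow> 0" by simp
  then have ev1: "eventually (\<lambda>k. norm (w k) < 1/2) sequentially"
    using order_tendstoD(2)[OF tendsto_norm_zero[OF \<open>w \<longlonglongrightarrow> 0\<close>], of "1/2"] by simp
  have "(\<lambda>k. (q^2)^k * (q^2 * x^2)) \<longlonglongrightarrow> 0 * (q^2 * x^2)"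
    using q q2 by (intro tendsto_mult tendsto_const LIMSEQ_power_zero) simp
  then have ev2: "eventually (\<lambda>k. (q^2)^k * (q^2 * x^2) < (1 - q^2) / 4) sequentially"
    using q2 by (intro order_tendstoD(2)) auto
  from eventually_conj[OF ev1 ev2] obtain N where N:
    "\<And>k. k \<ge> N \<Longrightarrow> norm (w k) < 1/2 \<and> (q^2)^k * (q^2 * x^2) < (1 - q^2) / 4"
    unfolding eventually_sequentially by blast
  show ?thesis
  proof (rule summable_ratio_test[of "1/2" N])
    fix n assume "n \<ge> N"
    note Nn = N[OF this]
    define h1 where "h1 = norm (hterm q \<nu> x (Suc n))"
    define h0 where "h0 = norm (hterm q \<nu> x n)"
    have "norm (hterm q \<nu> x (Suc n) * (1 - Q ^ Suc n) * (1 - w n))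
        = norm (- complex_of_real (q ^ (2 * n + 2) * x ^ 2) * hterm q \<nu> x n)"
      using hterm_rec[OF q, of \<nu> x n] unfolding Q_def w_def by simp
    then have eq: "h1 * norm (1 - Q ^ Suc n) * norm (1 - w n) = q ^ (2 * n + 2) * x ^ 2 * h0"
      unfolding h1_def h0_def norm_mult norm_minus_cancel norm_of_real using q by simp
    have a1: "norm (1 - Q ^ Suc n) \<ge> 1 - q^2"
    proof -
      have "(q^2)^Suc n \<le> q^2" using q q2
        by (metis less_imp_le power_Suc power_le_one zero_le_power2 mult_left_le)
      moreover have "norm (1 - Q ^ Suc n) = norm (complex_of_real (1 - (q^2)^Suc n))" unfolding Q_def by simp
      moreover have "(q^2)^Suc n \<le> 1" using q2 q by (intro power_le_one) auto
      ultimately show ?thesis using q2 by (simp only: norm_of_real)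
    qed
    have a2: "norm (1 - w n) \<ge> 1/2"
      using Nn norm_triangle_ineq2[of 1 "w n"] by (simp add: norm_minus_commute)
    have "h1 * ((1 - q^2) * (1/2)) \<le> h1 * norm (1 - Q ^ Suc n) * norm (1 - w n)"
      unfolding mult.assoc using a1 a2 q2 unfolding h1_def
      by (intro mult_left_mono mult_mono) auto
    also have "\<dots> = q ^ (2 * n + 2) * x ^ 2 * h0" by (rule eq)
    also have "q ^ (2 * n + 2) * x ^ 2 = (q^2)^n * (q^2 * x^2)"
      by (simp add: power_mult power_add power2_eq_square power_mult_distrib)
    also have "(q^2)^n * (q^2 * x^2) * h0 \<le> (1 - q^2) / 4 * h0"
      using Nn unfolding h0_def by (intro mult_right_mono) auto
    finally have "h1 * ((1 - q^2) * (1/2)) \<le> (1 - q^2) / 4 * h0" .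
    then have "(1 - q^2) * (2 * h1) \<le> (1 - q^2) * h0" by (simp add: field_simps)
    then have "2 * h1 \<le> h0" using q2 by (simp add: mult_le_cancel_left)
    then show "norm (hterm q \<nu> x (Suc n)) \<le> 1/2 * norm (hterm q \<nu> x n)"
      unfolding h1_def[symmetric] h0_def[symmetric] by simp
  qed simp
qed

lemma hterm_base0:
  assumes q: "0 < q" "q < 1"
  shows "(1 - qpow q (2 * \<nu>)) * hterm q \<nu> x 0 - hterm q (\<nu> - 1) x 0 = 0"
proof -
  define Q where "Q = complex_of_real (q^2)"
  have nQ: "norm Q < 1" unfolding Q_def using q by (simp add: norm_power abs_square_less_1)
  have e: "2 * (\<nu> - 1) + 2 * of_nat 0 + 2 = 2 * \<nu>" by simp
  have e2: "qpow q (2 * \<nu>) * Q = qpow q (2 * \<nu> + 2 * of_nat 0 + 2)"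
  proof -
    have "2 * \<nu> + 2 * of_nat 0 + 2 = 2 * \<nu> + of_nat 2" by simp
    then show ?thesis unfolding Q_def using q by (simp only: qpow_add qpow_nat)
  qed
  show ?thesis unfolding hterm_def e Q_def[symmetric]
    using qpoch_inf_rec[OF nQ, of "qpow q (2 * \<nu>)"] unfolding e2 by simp
qed

lemma base_aux:
  fixes G t w s A P X y r Q2 :: complex
  assumes "G \<noteq> 0" "1 - t \<noteq> 0" "t = r * Q2"
  shows "(1 - w) * (-s * (A * t) * P / (G * (1 - t)) * (X * y)) -
         -s * (A * t) * ((1 - w * t) * P) / (G * (1 - t)) * (X * y) = w * Q2 * y * (s * A * P / G * (r * X))"
proof -
  define d where "d = G * (1 - t)"
  have d: "d \<noteq> 0" using assms unfolding d_def by simp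
  have "(1 - w) * (-s * (A * t) * P / d * (X * y)) - -s * (A * t) * ((1 - w * t) * P) / d * (X * y)
        = s * A * t * P * X * y * w * (1 - t) / d"
    using d by (simp add: field_simps)
  also have "\<dots> = s * A * t * P * X * y * w / G" unfolding d_def using assms by (simp add: field_simps)
  finally show ?thesis unfolding d_def assms(3) by (simp add: field_simps)
qed

lemma hterm_baseSuc:
  assumes q: "0 < q" "q < 1"
  shows "(1 - qpow q (2 * \<nu>)) * hterm q \<nu> x (Suc k) - hterm q (\<nu> - 1) x (Suc k)
         = qpow q (2 * \<nu> + 2) * complex_of_real (x^2) * hterm q (\<nu> + 1) (q * x) k"
proof -
  define Q where "Q = complex_of_real (q^2)"
  define w where "w = qpow q (2 * \<nu>)"
  define P where "P = qpoch_inf (qpow q (2 * \<nu> + 2 * of_nat (Suc k) + 2)) Q"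
  define G where "G = qpoch Q Q k"
  have nQ: "norm Q < 1" unfolding Q_def using q by (simp add: norm_power abs_square_less_1)
  have e1: "2 * (\<nu> - 1) + 2 * of_nat (Suc k) + 2 = 2 * \<nu> + 2 * of_nat k + 2" by simp
  have e2: "2 * (\<nu> + 1) + 2 * of_nat k + 2 = 2 * \<nu> + 2 * of_nat (Suc k) + 2" by simp
  have e3: "qpow q (2 * \<nu> + 2 * of_nat k + 2) * Q = qpow q (2 * \<nu> + 2 * of_nat (Suc k) + 2)"
  proof -
    have "2 * \<nu> + 2 * of_nat (Suc k) + 2 = (2 * \<nu> + 2 * of_nat k + 2) + of_nat 2" by simp
    then show ?thesis unfolding Q_def using q by (simp only: qpow_add qpow_nat)
  qed
  have e4: "qpow q (2 * \<nu> + 2 * of_nat k + 2) = w * complex_of_real (q ^ (2 * k + 2))"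
  proof -
    have "2 * \<nu> + 2 * of_nat k + 2 = 2 * \<nu> + of_nat (2 * k + 2)" by simp
    then show ?thesis unfolding w_def using q by (simp only: qpow_add qpow_nat)
  qed
  have e5: "qpow q (2 * \<nu> + 2) = w * complex_of_real (q ^ 2)"
  proof -
    have "2 * \<nu> + 2 = 2 * \<nu> + of_nat 2" by simp
    then show ?thesis unfolding w_def using q by (simp only: qpow_add qpow_nat)
  qed
  have Prec: "qpoch_inf (qpow q (2 * \<nu> + 2 * of_nat k + 2)) Q = (1 - w * complex_of_real (q ^ (2 * k + 2))) * P"
  proof -
    have "qpoch_inf (qpow q (2 * \<nu> + 2 * of_nat k + 2)) Q = (1 - qpow q (2 * \<nu> + 2 * of_nat k + 2)) * P"
      using qpoch_inf_rec[OF nQ, of "qpow q (2 * \<nu> + 2 * of_nat k + 2)"] unfolding e3 P_def .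
    then show ?thesis unfolding e4 .
  qed
  have GS: "qpoch Q Q (Suc k) = G * (1 - complex_of_real (q ^ (2 * k + 2)))"
  proof -
    have "q ^ (2*k+2) = q^2 * (q^2)^k" by (simp add: power_add power_mult mult.commute power2_eq_square power_mult_distrib)
    then have "Q * Q ^ k = complex_of_real (q ^ (2 * k + 2))" unfolding Q_def by simp
    then show ?thesis unfolding G_def qpoch_Suc by simp
  qed
  have Gnz: "G \<noteq> 0" "qpoch Q Q (Suc k) \<noteq> 0" unfolding G_def Q_def using qpoch_Q_nonzero q by auto
  have p1: "q ^ (Suc k * (Suc k + 1)) = q ^ (k * (k + 1)) * q ^ (2 * k + 2)"
  proof -
    have "Suc k * (Suc k + 1) = k * (k + 1) + (2 * k + 2)" by (simp add: algebra_simps)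
    then show ?thesis by (simp only: power_add)
  qed
  have p2: "x ^ (2 * Suc k) = x ^ (2 * k) * x ^ 2"
    by (simp add: power_add[symmetric] algebra_simps)
  have p3: "(q * x) ^ (2 * k) = q ^ (2 * k) * x ^ (2 * k)" by (simp add: power_mult_distrib)
  have p4: "q ^ (2 * k + 2) = q ^ (2 * k) * q^2" by (rule power_add)
  have G1: "1 - complex_of_real (q ^ (2 * k + 2)) \<noteq> 0" using Gnz GS by auto
  define A where "A = complex_of_real (q ^ (k * (k + 1)))"
  define r where "r = complex_of_real (q ^ (2 * k))"
  define X where "X = complex_of_real (x ^ (2 * k))"
  define y where "y = complex_of_real (x ^ 2)"
  define Q2 where "Q2 = complex_of_real (q ^ 2)"
  have c1: "complex_of_real (q ^ (2 * k + 2)) = r * Q2" unfolding r_def Q2_def p4 by simp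
  have L1: "hterm q \<nu> x (Suc k) = (-1)^Suc k * (A * (r * Q2)) * P / (G * (1 - r * Q2)) * (X * y)"
    unfolding hterm_def Q_def[symmetric] P_def[symmetric] GS G_def[symmetric]
    unfolding p1 p2 of_real_mult c1 A_def[symmetric] X_def[symmetric] y_def[symmetric] ..
  have L2: "hterm q (\<nu> - 1) x (Suc k) = (-1)^Suc k * (A * (r * Q2)) * ((1 - w * (r * Q2)) * P) / (G * (1 - r * Q2)) * (X * y)"
    unfolding hterm_def e1 Q_def[symmetric] Prec GS G_def[symmetric]
    unfolding p1 p2 of_real_mult c1 A_def[symmetric] X_def[symmetric] y_def[symmetric] ..
  have L3: "hterm q (\<nu> + 1) (q * x) k = (-1)^k * A * P / G * (r * X)"
    unfolding hterm_def e2 Q_def[symmetric] P_def[symmetric] G_def[symmetric]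
    unfolding p3 of_real_mult A_def[symmetric] X_def[symmetric] r_def[symmetric] ..
  have L4: "qpow q (2 * \<nu> + 2) = w * Q2" unfolding e5 Q2_def ..
  have nz: "G \<noteq> 0" "1 - r * Q2 \<noteq> 0" using Gnz G1 c1 by auto
  show ?thesis unfolding L1 L2 L3 L4 y_def[symmetric] w_def[symmetric] power_Suc mult_minus1
    using base_aux[OF nz refl] by simp
qed

lemma S_rec:
  assumes q: "0 < q" "q < 1"
  shows "(1 - qpow q (2 * \<nu>)) * suminf (hterm q \<nu> x) - suminf (hterm q (\<nu> - 1) x)
         = qpow q (2 * \<nu> + 2) * complex_of_real (x^2) * suminf (hterm q (\<nu> + 1) (q * x))"
proof -
  define f where "f = (\<lambda>k. (1 - qpow q (2 * \<nu>)) * hterm q \<nu> x k - hterm q (\<nu> - 1) x k)"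
  have sf: "summable f" unfolding f_def
    by (intro summable_diff summable_mult hterm_summable q)
  have "(1 - qpow q (2 * \<nu>)) * suminf (hterm q \<nu> x) - suminf (hterm q (\<nu> - 1) x) = suminf f"
    unfolding f_def
    by (subst suminf_mult[symmetric], rule hterm_summable[OF q], rule suminf_diff)
       (intro summable_mult hterm_summable q)+
  also have "\<dots> = (\<Sum>k. f (Suc k))" using suminf_split_head[OF sf] hterm_base0[OF q]
    unfolding f_def by simp
  also have "\<dots> = (\<Sum>k. qpow q (2 * \<nu> + 2) * complex_of_real (x^2) * hterm q (\<nu> + 1) (q * x) k)"
    unfolding f_def hterm_baseSuc[OF q] ..
  also have "\<dots> = qpow q (2 * \<nu> + 2) * complex_of_real (x^2) * suminf (hterm q (\<nu> + 1) (q * x))"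
    by (rule suminf_mult[OF hterm_summable[OF q]])
  finally show ?thesis .
qed

lemma coef_a_1_0:
  assumes q: "0 < q" "q < 1"
  shows "coef_a q \<nu> 1 0 = qpow q (- (1 + \<nu>)) * (1 - qpow q (2 * \<nu>))"
proof -
  have "qpoch (complex_of_real (q^2)) (complex_of_real (q^2)) 1 \<noteq> 0" using qpoch_Q_nonzero q by blast
  then show ?thesis unfolding coef_a_def using q by (simp add: qpoch_def qpow_def)
qed

lemma coef_b_1_0:
  assumes q: "0 < q" "q < 1"
  shows "coef_b q \<nu> 1 0 = - qpow q (- 1 - \<nu>)"
  unfolding coef_b_def coef_a_def using q by (simp add: qpoch_def qpow_def)

lemma J_base:
  assumes q: "0 < q" "q < 1" and y: "0 < y"
  shows "hahn_exton q (\<nu> + 1) (y * q) =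
         coef_a q \<nu> 1 0 / complex_of_real y * hahn_exton q \<nu> y + coef_b q \<nu> 1 0 * hahn_exton q (\<nu> - 1) y"
proof -
  define C where "C = qpoch_inf (complex_of_real (q^2)) (complex_of_real (q^2))"
  define S0 where "S0 = suminf (hterm q \<nu> y)"
  define Sm where "Sm = suminf (hterm q (\<nu> - 1) y)"
  define S1 where "S1 = suminf (hterm q (\<nu> + 1) (q * y))"
  define ly where "ly = complex_of_real (ln y)"
  define lq where "lq = complex_of_real (ln q)"
  define E1 where "E1 = exp (\<nu> * ly)"
  define E2 where "E2 = exp (\<nu> * lq)"
  have E2q: "E2 = qpow q \<nu>" unfolding E2_def lq_def using q by (simp add: qpow_exp)
  have q1: "complex_of_real q = qpow q 1" using qpow_nat[OF q(1), of 1] by simp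
  have ey: "exp ly = complex_of_real y" unfolding ly_def using y by (metis exp_ln exp_of_real)
  have eq: "exp lq = complex_of_real q" unfolding lq_def using q by (metis exp_ln exp_of_real)
  have rec: "(1 - E2 * E2) * S0 - Sm = E2 * E2 * (complex_of_real q)^2 * (complex_of_real y)^2 * S1"
  proof -
    have a: "qpow q (2 * \<nu>) = E2 * E2" unfolding E2_def lq_def using q
      by (simp add: qpow_exp exp_add[symmetric] algebra_simps)
    have "2 * \<nu> + 2 = 2 * \<nu> + of_nat 2" by simp
    then have b: "qpow q (2 * \<nu> + 2) = E2 * E2 * (complex_of_real q)^2" 
      using q by (simp only: qpow_add qpow_nat a of_real_power)
    show ?thesis using S_rec[OF q, of \<nu> y] unfolding a b S0_def[symmetric] Sm_def[symmetric] S1_def[symmetric]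
      by simp
  qed
  have L: "hahn_exton q (\<nu> + 1) (y * q) = E1 * complex_of_real y * E2 * complex_of_real q / C * S1"
  proof -
    have "complex_of_real (y * q) powr (\<nu> + 1) = exp ((\<nu> + 1) * (ly + lq))"
      unfolding ly_def lq_def using q y cpow_pos[of "y * q" "\<nu> + 1"] by (simp add: ln_mult)
    also have "\<dots> = E1 * complex_of_real y * E2 * complex_of_real q"
      unfolding E1_def E2_def ey[symmetric] eq[symmetric] by (simp add: exp_add[symmetric] algebra_simps)
    finally show ?thesis unfolding hahn_exton_hterm C_def[symmetric] S1_def
      by (simp add: mult.commute)
  qed
  have R1: "hahn_exton q \<nu> y = E1 / C * S0"
    unfolding hahn_exton_hterm C_def[symmetric] S0_def E1_def ly_def using y by (simp add: cpow_pos)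
  have R2: "hahn_exton q (\<nu> - 1) y = E1 / complex_of_real y / C * Sm"
  proof -
    have "complex_of_real y powr (\<nu> - 1) = exp (\<nu> * ly - ly)"
      unfolding ly_def using y by (simp add: cpow_pos algebra_simps)
    also have "\<dots> = E1 / complex_of_real y" unfolding E1_def ey[symmetric] by (rule exp_diff)
    finally show ?thesis unfolding hahn_exton_hterm C_def[symmetric] Sm_def by simp
  qed
  have ca: "coef_a q \<nu> 1 0 = (1 - E2 * E2) / (E2 * complex_of_real q)"
  proof -
    have "qpow q (- (1 + \<nu>)) * (E2 * complex_of_real q) = qpow q (- (1 + \<nu>) + \<nu> + 1)"
      unfolding E2q q1 using q by (simp only: qpow_add mult.assoc)
    also have "\<dots> = 1" using q by (simp add: qpow_def)
    finally have "qpow q (- (1 + \<nu>)) = 1 / (E2 * complex_of_real q)"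
      using q by (simp add: field_simps E2_def)
    moreover have "qpow q (2 * \<nu>) = E2 * E2" unfolding E2_def lq_def using q
      by (simp add: qpow_exp exp_add[symmetric] algebra_simps)
    ultimately show ?thesis unfolding coef_a_1_0[OF q] by simp
  qed
  have cb: "coef_b q \<nu> 1 0 = - 1 / (E2 * complex_of_real q)"
  proof -
    have "qpow q (- 1 - \<nu>) * (E2 * complex_of_real q) = qpow q (- 1 - \<nu> + \<nu> + 1)"
      unfolding E2q q1 using q by (simp only: qpow_add mult.assoc)
    also have "\<dots> = 1" using q by (simp add: qpow_def)
    finally have "qpow q (- 1 - \<nu>) = 1 / (E2 * complex_of_real q)"
      using q by (simp add: field_simps E2_def)
    then show ?thesis unfolding coef_b_1_0[OF q] by simp
  qed
  have nz: "E2 \<noteq> 0" "complex_of_real q \<noteq> 0" "complex_of_real y \<noteq> 0" unfolding E2_def using q y by auto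
  have "coef_a q \<nu> 1 0 / complex_of_real y * hahn_exton q \<nu> y + coef_b q \<nu> 1 0 * hahn_exton q (\<nu> - 1) y
        = E1 / (E2 * complex_of_real q * complex_of_real y * C) * ((1 - E2 * E2) * S0 - Sm)"
    unfolding R1 R2 ca cb using nz by (cases "C = 0") (simp_all add: field_simps)
  also have "\<dots> = hahn_exton q (\<nu> + 1) (y * q)"
    unfolding rec L using nz by (cases "C = 0") (simp_all add: field_simps power2_eq_square)
  finally show ?thesis ..
qed


definition Rq :: "real \<Rightarrow> complex \<Rightarrow> nat \<Rightarrow> nat \<Rightarrow> complex" where
  "Rq q w m i = qpoch w (complex_of_real (q^2)) (m - i) * qpoch (complex_of_real (q^2)) (complex_of_real (q^2)) (m - i) /
     (qpoch (complex_of_real (q^2)) (complex_of_real (q^2)) i * qpoch w (complex_of_real (q^2)) i *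
      qpoch (complex_of_real (q^2)) (complex_of_real (q^2)) (m - 2 * i))"

lemma coef_a_Rq: "coef_a q \<nu> m i = (-1)^i * qpow q (- (of_nat m * (of_nat m + \<nu>)) + of_nat i * (3 * of_nat i + \<nu> - 1)) * Rq q (qpow q (2 * \<nu>)) m i"
  if "0 < q" for q
  unfolding coef_a_def Rq_def qpow_add[OF that] by (simp add: times_divide_eq_right mult_ac)

lemma qpoch_nz:
  assumes "\<And>j. w * Q ^ j \<noteq> 1"
  shows "qpoch w Q n \<noteq> 0"
  using assms unfolding qpoch_def by (auto simp: prod_zero_iff)

lemma qpoch_shift1:
  assumes "1 - w \<noteq> 0"
  shows "qpoch (w * Q) Q n = qpoch w Q (Suc n) / (1 - w)"
  using assms by (simp add: qpoch_shift)

lemma R0: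
  fixes q :: real and w :: complex
  assumes q: "0 < q" "q < 1" and hw: "\<And>j. w * complex_of_real (q^2) ^ j \<noteq> 1"
  shows "Rq q w (Suc m) 0 = Rq q (w * complex_of_real (q^2)) m 0 * (1 - w)"
proof -
  define Q where "Q = complex_of_real (q^2)"
  have hw': "\<And>j. w * Q ^ j \<noteq> 1" using hw unfolding Q_def .
  have w1: "1 - w \<noteq> 0" using hw'[of 0] by simp
  have G: "qpoch Q Q n \<noteq> 0" for n unfolding Q_def using qpoch_Q_nonzero q by blast
  show ?thesis unfolding Rq_def Q_def[symmetric] qpoch_shift1[OF w1]
    using w1 G G[of "Suc m", unfolded qpoch_Suc] by (simp add: qpoch_def[of _ _ 0] qpoch_Suc)
qed

lemma RB_alg:
  fixes u0 u1 g0 g1 g2 a b w c da db dw dwa :: complex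
  assumes nz: "u0 \<noteq> 0" "u1 \<noteq> 0" "g0 \<noteq> 0" "g1 \<noteq> 0" "g2 \<noteq> 0" "da \<noteq> 0" "db \<noteq> 0"
     "dw \<noteq> 0" "dwa \<noteq> 0" "c \<noteq> 0"
    and d: "da = 1 - a" "db = 1 - b" "dw = 1 - w" "dwa = 1 - w * a"
  shows "u1 * (g2 * (1 - a * b)) / (g0 * da * u0 * (g1 * db)) =
     a * ((u1 / dw) * g2 / (g0 * da * (u0 * dwa / dw) * g1)) * dw +
     (u1 * (1 - w * (a * b)) / c) * g2 / (g0 * (u0 * dwa / c) * (g1 * db))"
proof -
  have key: "a * dw * db + (1 - w * (a * b)) * da = (1 - a * b) * dwa"
    unfolding d by (simp add: algebra_simps)
  have "a * ((u1 / dw) * g2 / (g0 * da * (u0 * dwa / dw) * g1)) * dw +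
     (u1 * (1 - w * (a * b)) / c) * g2 / (g0 * (u0 * dwa / c) * (g1 * db))
     = (u1 * g2 / (g0 * u0 * g1 * da * db * dwa)) * (a * dw * db + (1 - w * (a * b)) * da)"
    using nz by (simp add: field_simps)
  also have "\<dots> = (u1 * g2 / (g0 * u0 * g1 * da * db * dwa)) * ((1 - a * b) * dwa)"
    by (simp only: key)
  also have "\<dots> = u1 * (g2 * (1 - a * b)) / (g0 * da * u0 * (g1 * db))"
    using nz by (simp add: field_simps)
  finally show ?thesis ..
qed

lemma RB:
  fixes q :: real and w :: complex
  assumes q: "0 < q" "q < 1" and hw: "\<And>j. w * complex_of_real (q^2) ^ j \<noteq> 1"
    and m: "m = 2 * Suc s + r"
  shows "Rq q w (Suc m) (Suc s) = complex_of_real (q^2) ^ Suc s * Rq q (w * complex_of_real (q^2)) m (Suc s) * (1 - w)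
            + Rq q (w * complex_of_real (q^2) * complex_of_real (q^2)) (m - 1) s"
proof -
  define Q where "Q = complex_of_real (q^2)"
  have hw': "\<And>j. w * Q ^ j \<noteq> 1" using hw unfolding Q_def .
  have w1: "1 - w \<noteq> 0" using hw'[of 0] by simp
  have wQ: "1 - w * Q \<noteq> 0" using hw'[of 1] by simp
  have G: "qpoch Q Q n \<noteq> 0" for n unfolding Q_def using qpoch_Q_nonzero q by blast
  have U: "qpoch w Q n \<noteq> 0" for n using qpoch_nz[OF hw'] .
  have sh1: "qpoch (w * Q) Q n = qpoch w Q (Suc n) / (1 - w)" for n by (rule qpoch_shift1[OF w1])
  have sh2: "qpoch (w * Q * Q) Q n = qpoch w Q (Suc (Suc n)) / ((1 - w) * (1 - w * Q))" for n
    using qpoch_shift1[OF wQ, of Q n] unfolding sh1 by simp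
  define a where "a = Q ^ Suc s"
  define b where "b = Q ^ Suc r"
  have ab: "Q ^ Suc (Suc (s + r)) = a * b" unfolding a_def b_def by (simp add: power_add[symmetric])
  have n1: "Suc m - Suc s = Suc (Suc (s + r))" "Suc m - 2 * Suc s = Suc r" "m - Suc s = Suc (s + r)"
    "m - 2 * Suc s = r" "m - 1 - s = Suc (s + r)" "m - 1 - 2 * s = Suc r" using m by auto
  have e1: "qpoch w Q (Suc (Suc s)) = qpoch w Q (Suc s) * (1 - w * a)" unfolding a_def qpoch_Suc[of w Q "Suc s"] ..
  have e2: "qpoch w Q (Suc (Suc (Suc (s + r)))) = qpoch w Q (Suc (Suc (s + r))) * (1 - w * (a * b))"
    unfolding ab[symmetric] qpoch_Suc[of w Q "Suc (Suc (s + r))"] ..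
  have e3: "qpoch Q Q (Suc s) = qpoch Q Q s * (1 - a)" unfolding a_def qpoch_Suc by simp
  have e4: "qpoch Q Q (Suc r) = qpoch Q Q r * (1 - b)" unfolding b_def qpoch_Suc by simp
  have e5: "qpoch Q Q (Suc (Suc (s + r))) = qpoch Q Q (Suc (s + r)) * (1 - a * b)"
    unfolding ab[symmetric] qpoch_Suc[of Q Q "Suc (s + r)"] by simp
  have nz1: "1 - a \<noteq> 0" using G[of "Suc s"] unfolding e3 by simp
  have nz2: "1 - b \<noteq> 0" using G[of "Suc r"] unfolding e4 by simp
  have nz3: "1 - w * a \<noteq> 0" using U[of "Suc (Suc s)"] unfolding e1 by simp
  show ?thesis unfolding Rq_def Q_def[symmetric] n1 sh1 sh2 a_def[symmetric]
    unfolding e1 e2 e3 e4 e5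
    by (rule RB_alg[OF U[of "Suc s"] U[of "Suc (Suc (s + r))"] G[of s] G[of r] G[of "Suc (s + r)"] nz1 nz2 w1 nz3 _ refl refl refl refl])
       (use w1 wQ in simp)
qed

lemma RC:
  fixes q :: real and w :: complex
  assumes q: "0 < q" "q < 1" and hw: "\<And>j. w * complex_of_real (q^2) ^ j \<noteq> 1"
    and m: "m = 2 * s + 1"
  shows "Rq q w (Suc m) (Suc s) = Rq q (w * complex_of_real (q^2) * complex_of_real (q^2)) (m - 1) s"
proof -
  define Q where "Q = complex_of_real (q^2)"
  have hw': "\<And>j. w * Q ^ j \<noteq> 1" using hw unfolding Q_def .
  have w1: "1 - w \<noteq> 0" using hw'[of 0] by simp
  have wQ: "1 - w * Q \<noteq> 0" using hw'[of 1] by simp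
  have G: "qpoch Q Q n \<noteq> 0" for n unfolding Q_def using qpoch_Q_nonzero q by blast
  have U: "qpoch w Q n \<noteq> 0" for n using qpoch_nz[OF hw'] .
  have sh1: "qpoch (w * Q) Q n = qpoch w Q (Suc n) / (1 - w)" for n by (rule qpoch_shift1[OF w1])
  have sh2: "qpoch (w * Q * Q) Q n = qpoch w Q (Suc (Suc n)) / ((1 - w) * (1 - w * Q))" for n
    using qpoch_shift1[OF wQ, of Q n] unfolding sh1 by simp
  have n1: "Suc m - Suc s = Suc s" "Suc m - 2 * Suc s = 0" "m - 1 - s = s" "m - 1 - 2 * s = 0" using m by auto
  show ?thesis unfolding Rq_def Q_def[symmetric] n1 sh2
    using U[of "Suc s"] U[of "Suc (Suc s)"] G[of s] G[of "Suc s"] w1 wQ by (simp add: qpoch_def[of _ _ 0])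
qed


lemma qpow_shift_nat:
  assumes "0 < q" "a = b + of_nat n"
  shows "qpow q a = qpow q b * complex_of_real (q ^ n)"
  using assms by (simp add: qpow_add qpow_nat)

lemma hyp_w:
  assumes q: "0 < q" and H: "\<forall>i::nat. qpow q (2 * \<nu> + 2 * of_nat i) \<noteq> 1"
  shows "qpow q (2 * \<nu>) * complex_of_real (q^2) ^ j \<noteq> 1"
proof -
  have "qpow q (2 * \<nu> + 2 * of_nat j) = qpow q (2 * \<nu>) * complex_of_real (q ^ (2 * j))"
    by (rule qpow_shift_nat[OF q]) simp
  then show ?thesis using H by (metis of_real_power power_mult)
qed

lemma w_shift1:
  assumes q: "0 < q"
  shows "qpow q (2 * (\<nu> + 1)) = qpow q (2 * \<nu>) * complex_of_real (q^2)"
  by (rule qpow_shift_nat[OF q]) (simp add: algebra_simps)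

lemma w_shift2:
  assumes q: "0 < q"
  shows "qpow q (2 * (\<nu> + 1 + 1)) = qpow q (2 * \<nu>) * complex_of_real (q^2) * complex_of_real (q^2)"
proof -
  have "qpow q (2 * (\<nu> + 1 + 1)) = qpow q (2 * \<nu>) * complex_of_real (q ^ 4)"
    by (rule qpow_shift_nat[OF q]) (simp add: algebra_simps)
  moreover have "q ^ 4 = q^2 * q^2" by simp
  then have "complex_of_real (q ^ 4) = complex_of_real (q^2) * complex_of_real (q^2)" by (simp only: of_real_mult)
  ultimately show ?thesis by (simp only: mult.assoc)
qed

lemma caseB_alg:
  fixes S e0 e1 e2 eb en R1 R2 w X XR A B K :: complex
  assumes nz: "X \<noteq> 0" "XR \<noteq> 0" "A \<noteq> 0" "B \<noteq> 0" "K \<noteq> 0"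
    and P1: "e1 * en = e0 * (A * A * B * A)" and P2: "eb * e2 = e0 * (K * B)"
  shows "- S * e0 * (A * A * R1 * (1 - w) + R2) / (X * XR) =
         - S * e1 * R1 / (XR * B) * (en * (1 - w) / (X * A)) + (- eb * (S * e2 * R2)) / (X * XR * (K * B))"
proof -
  have "- S * e1 * R1 / (XR * B) * (en * (1 - w) / (X * A)) = - S * R1 * (1 - w) * (e1 * en) / (XR * B * X * A)"
    using nz by (simp add: field_simps)
  also have "\<dots> = - S * R1 * (1 - w) * e0 * A * A / (X * XR)"
    unfolding P1 using nz by (simp add: field_simps)
  finally have 1: "- S * e1 * R1 / (XR * B) * (en * (1 - w) / (X * A)) = - S * R1 * (1 - w) * e0 * A * A / (X * XR)" .
  have "(- eb * (S * e2 * R2)) / (X * XR * (K * B)) = - S * R2 * (eb * e2) / (X * XR * (K * B))"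
    by (simp add: field_simps)
  also have "\<dots> = - S * R2 * e0 / (X * XR)"
    unfolding P2 using nz by (simp add: field_simps)
  finally have 2: "(- eb * (S * e2 * R2)) / (X * XR * (K * B)) = - S * R2 * e0 / (X * XR)" .
  show ?thesis unfolding 1 2 using nz by (simp add: field_simps)
qed

lemma coefA_caseB:
  assumes q: "0 < q" "q < 1" and H: "\<forall>i::nat. qpow q (2 * \<nu> + 2 * of_nat i) \<noteq> 1" and x: "0 < x"
    and m: "m = 2 * Suc s + r"
  shows "coef_a q \<nu> (Suc m) (Suc s) / complex_of_real (x ^ (Suc m - 2 * Suc s)) =
     coef_a q (\<nu> + 1) m (Suc s) / complex_of_real ((x * q) ^ (m - 2 * Suc s)) * (coef_a q \<nu> 1 0 / complex_of_real (x * q ^ Suc s))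
     + coef_b q (\<nu> + 1) m s / complex_of_real ((x * q) ^ (m - 1 - 2 * s))"
proof -
  define w where "w = qpow q (2 * \<nu>)"
  define Q where "Q = complex_of_real (q^2)"
  have hw: "\<And>j. w * complex_of_real (q^2) ^ j \<noteq> 1" unfolding w_def using hyp_w[OF q(1) H] .
  define E0 where "E0 = - (of_nat (Suc m) * (of_nat (Suc m) + \<nu>)) + of_nat (Suc s) * (3 * of_nat (Suc s) + \<nu> - 1)"
  define E1 where "E1 = - (of_nat m * (of_nat m + (\<nu> + 1))) + of_nat (Suc s) * (3 * of_nat (Suc s) + (\<nu> + 1) - 1)"
  define E2 where "E2 = - (of_nat (m - 1) * (of_nat (m - 1) + (\<nu> + 1 + 1))) + of_nat s * (3 * of_nat s + (\<nu> + 1 + 1) - 1)"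
  define R0 where "R0 = Rq q w (Suc m) (Suc s)"
  define R1 where "R1 = Rq q (w * Q) m (Suc s)"
  define R2 where "R2 = Rq q (w * Q * Q) (m - 1) s"
  have Rid: "R0 = Q ^ Suc s * R1 * (1 - w) + R2"
    unfolding R0_def R1_def R2_def Q_def using RB[OF q hw m] .
  have cA0: "coef_a q \<nu> (Suc m) (Suc s) = (-1) ^ Suc s * qpow q E0 * R0"
    unfolding coef_a_Rq[OF q(1)] E0_def R0_def w_def ..
  have cA1: "coef_a q (\<nu> + 1) m (Suc s) = (-1) ^ Suc s * qpow q E1 * R1"
    unfolding coef_a_Rq[OF q(1)] E1_def R1_def w_shift1[OF q(1)] w_def Q_def ..
  have cB: "coef_b q (\<nu> + 1) m s = - qpow q (2 * of_nat s - of_nat m - (\<nu> + 1)) * ((-1) ^ s * qpow q E2 * R2)"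
    unfolding coef_b_def coef_a_Rq[OF q(1)] E2_def R2_def w_shift2[OF q(1)] w_def Q_def ..
  have c10: "coef_a q \<nu> 1 0 = qpow q (- (1 + \<nu>)) * (1 - w)" unfolding w_def by (rule coef_a_1_0[OF q])
  have n1: "Suc m - 2 * Suc s = Suc r" "m - 2 * Suc s = r" "m - 1 - 2 * s = Suc r" using m by auto
  have P1: "qpow q E1 * qpow q (- (1 + \<nu>)) = qpow q E0 * complex_of_real (q ^ (2 * Suc s + r + Suc s))"
    unfolding qpow_add[OF q(1), symmetric]
    by (rule qpow_shift_nat[OF q(1)]) (simp add: E0_def E1_def m algebra_simps)
  have P2: "qpow q (2 * of_nat s - of_nat m - (\<nu> + 1)) * qpow q E2 = qpow q E0 * complex_of_real (q ^ Suc r)"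
    unfolding qpow_add[OF q(1), symmetric]
    by (rule qpow_shift_nat[OF q(1)]) (simp add: E0_def E2_def m algebra_simps)
  have QS: "Q ^ Suc s = complex_of_real q ^ Suc s * complex_of_real q ^ Suc s" unfolding Q_def
    by (simp add: power_mult_distrib[symmetric] power2_eq_square)
  have nzq: "complex_of_real q \<noteq> 0" "complex_of_real x \<noteq> 0" "complex_of_real x ^ r \<noteq> 0"
     "complex_of_real q ^ r \<noteq> 0" "complex_of_real q ^ Suc s \<noteq> 0" using q x by auto
  have P1': "qpow q E1 * qpow q (- (1 + \<nu>)) = qpow q E0 *
     (complex_of_real q ^ Suc s * complex_of_real q ^ Suc s * complex_of_real q ^ r * complex_of_real q ^ Suc s)"
    unfolding P1 by (simp add: power_add power_mult_distrib mult_2)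
  have P2': "qpow q (2 * of_nat s - of_nat m - (\<nu> + 1)) * qpow q E2 = qpow q E0 * (complex_of_real q * complex_of_real q ^ r)"
    unfolding P2 by simp
  have sg: "(-1 :: complex) ^ Suc s = - ((-1) ^ s)" by simp
  have xs: "complex_of_real (x ^ Suc r) = complex_of_real x * complex_of_real x ^ r"
    "complex_of_real ((x * q) ^ r) = complex_of_real x ^ r * complex_of_real q ^ r"
    "complex_of_real (x * q ^ Suc s) = complex_of_real x * complex_of_real q ^ Suc s"
    "complex_of_real ((x * q) ^ Suc r) = complex_of_real x * complex_of_real x ^ r * (complex_of_real q * complex_of_real q ^ r)"
    by (simp_all add: power_mult_distrib)
  show ?thesis
    unfolding cA0 cA1 cB c10 n1 Rid QS sg xs
    by (rule caseB_alg[OF nzq(2,3,5,4,1) P1' P2'])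
qed

lemma coefA_caseA:
  assumes q: "0 < q" "q < 1" and H: "\<forall>i::nat. qpow q (2 * \<nu> + 2 * of_nat i) \<noteq> 1" and x: "0 < x"
  shows "coef_a q \<nu> (Suc m) 0 / complex_of_real (x ^ (Suc m - 2 * 0)) =
     coef_a q (\<nu> + 1) m 0 / complex_of_real ((x * q) ^ (m - 2 * 0)) * (coef_a q \<nu> 1 0 / complex_of_real (x * q ^ 0))"
proof -
  define w where "w = qpow q (2 * \<nu>)"
  define Q where "Q = complex_of_real (q^2)"
  have hw: "\<And>j. w * complex_of_real (q^2) ^ j \<noteq> 1" unfolding w_def using hyp_w[OF q(1) H] .
  define E0 where "E0 = - (of_nat (Suc m) * (of_nat (Suc m) + \<nu>)) + of_nat 0 * (3 * of_nat 0 + \<nu> - 1)"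
  define E1 where "E1 = - (of_nat m * (of_nat m + (\<nu> + 1))) + of_nat 0 * (3 * of_nat 0 + (\<nu> + 1) - 1)"
  define R1 where "R1 = Rq q (w * Q) m 0"
  have cA0: "coef_a q \<nu> (Suc m) 0 = qpow q E0 * (R1 * (1 - w))"
    unfolding coef_a_Rq[OF q(1)] E0_def R1_def w_def[symmetric] Q_def R0[OF q hw] by simp
  have cA1: "coef_a q (\<nu> + 1) m 0 = qpow q E1 * R1"
    unfolding coef_a_Rq[OF q(1)] E1_def R1_def w_shift1[OF q(1)] w_def Q_def by simp
  have c10: "coef_a q \<nu> 1 0 = qpow q (- (1 + \<nu>)) * (1 - w)" unfolding w_def by (rule coef_a_1_0[OF q])
  have P1: "qpow q E1 * qpow q (- (1 + \<nu>)) = qpow q E0 * complex_of_real (q ^ m)"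
    unfolding qpow_add[OF q(1), symmetric]
    by (rule qpow_shift_nat[OF q(1)]) (simp add: E0_def E1_def algebra_simps)
  have nz: "complex_of_real x \<noteq> 0" "complex_of_real x ^ m \<noteq> 0" "complex_of_real q ^ m \<noteq> 0" using q x by auto
  have "qpow q E1 * R1 / (complex_of_real x ^ m * complex_of_real q ^ m) * (qpow q (- (1 + \<nu>)) * (1 - w) / complex_of_real x)
      = R1 * (1 - w) * (qpow q E1 * qpow q (- (1 + \<nu>))) / (complex_of_real x * complex_of_real x ^ m * complex_of_real q ^ m)"
    using nz by (simp add: field_simps)
  also have "\<dots> = qpow q E0 * (R1 * (1 - w)) / (complex_of_real x * complex_of_real x ^ m)"
    unfolding P1 using nz q by (simp add: field_simps)
  finally have F: "qpow q E1 * R1 / (complex_of_real x ^ m * complex_of_real q ^ m) * (qpow q (- (1 + \<nu>)) * (1 - w) / complex_of_real x)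
     = qpow q E0 * (R1 * (1 - w)) / (complex_of_real x * complex_of_real x ^ m)" .
  have "q \<noteq> 0" using q by simp
  then show ?thesis unfolding cA0 cA1 c10 using F by (simp add: power_mult_distrib)
qed

lemma coefA_caseC:
  assumes q: "0 < q" "q < 1" and H: "\<forall>i::nat. qpow q (2 * \<nu> + 2 * of_nat i) \<noteq> 1"
    and m: "m = 2 * s + 1"
  shows "coef_a q \<nu> (Suc m) (Suc s) / complex_of_real (x ^ (Suc m - 2 * Suc s)) =
     coef_b q (\<nu> + 1) m s / complex_of_real ((x * q) ^ (m - 1 - 2 * s))"
proof -
  define w where "w = qpow q (2 * \<nu>)"
  define Q where "Q = complex_of_real (q^2)"
  have hw: "\<And>j. w * complex_of_real (q^2) ^ j \<noteq> 1" unfolding w_def using hyp_w[OF q(1) H] .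
  define E0 where "E0 = - (of_nat (Suc m) * (of_nat (Suc m) + \<nu>)) + of_nat (Suc s) * (3 * of_nat (Suc s) + \<nu> - 1)"
  define E2 where "E2 = - (of_nat (m - 1) * (of_nat (m - 1) + (\<nu> + 1 + 1))) + of_nat s * (3 * of_nat s + (\<nu> + 1 + 1) - 1)"
  define R2 where "R2 = Rq q (w * Q * Q) (m - 1) s"
  have cA0: "coef_a q \<nu> (Suc m) (Suc s) = (-1) ^ Suc s * qpow q E0 * R2"
    unfolding coef_a_Rq[OF q(1)] E0_def R2_def w_def[symmetric] Q_def RC[OF q hw m] ..
  have cB: "coef_b q (\<nu> + 1) m s = - qpow q (2 * of_nat s - of_nat m - (\<nu> + 1)) * ((-1) ^ s * qpow q E2 * R2)"
    unfolding coef_b_def coef_a_Rq[OF q(1)] E2_def R2_def w_shift2[OF q(1)] w_def Q_def ..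
  have P2: "qpow q (2 * of_nat s - of_nat m - (\<nu> + 1)) * qpow q E2 = qpow q E0 * complex_of_real (q ^ 0)"
    unfolding qpow_add[OF q(1), symmetric]
    by (rule qpow_shift_nat[OF q(1)]) (simp add: E0_def E2_def m algebra_simps)
  have n1: "Suc m - 2 * Suc s = 0" "m - 1 - 2 * s = 0" using m by auto
  show ?thesis unfolding cA0 cB n1 using P2 by (simp add: algebra_simps)
qed

lemma coefB_step:
  assumes q: "0 < q" "q < 1" and x: "0 < x" and j: "2 * j \<le> m"
  shows "coef_b q \<nu> (Suc m) j / complex_of_real (x ^ (Suc m - 1 - 2 * j)) =
     coef_a q (\<nu> + 1) m j / complex_of_real ((x * q) ^ (m - 2 * j)) * coef_b q \<nu> 1 0"
proof -
  obtain r where r: "m = 2 * j + r" using j le_Suc_ex by blast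
  have P: "qpow q (2 * of_nat j - of_nat (Suc m) - \<nu>) * complex_of_real (q ^ r) = qpow q (- 1 - \<nu>)"
    by (rule qpow_shift_nat[OF q(1), symmetric]) (simp add: r algebra_simps)
  have n: "Suc m - 1 - 2 * j = r" "m - 2 * j = r" "Suc m - 1 = m" using r by auto
  have nz: "complex_of_real x ^ r \<noteq> 0" "complex_of_real q ^ r \<noteq> 0" using q x by auto
  show ?thesis unfolding coef_b_def[of q \<nu> "Suc m"] n coef_b_1_0[OF q] P[symmetric]
    using nz q x by (simp add: power_mult_distrib field_simps)
qed


lemma coefA_step:
  assumes q: "0 < q" "q < 1" and H: "\<forall>i::nat. qpow q (2 * \<nu> + 2 * of_nat i) \<noteq> 1" and x: "0 < x"
    and i: "2 * i \<le> Suc m"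
  shows "coef_a q \<nu> (Suc m) i / complex_of_real (x ^ (Suc m - 2 * i)) =
     (if 2 * i \<le> m then coef_a q (\<nu> + 1) m i / complex_of_real ((x * q) ^ (m - 2 * i)) * (coef_a q \<nu> 1 0 / complex_of_real (x * q ^ i)) else 0)
     + (if 1 \<le> i then coef_b q (\<nu> + 1) m (i - 1) / complex_of_real ((x * q) ^ (m - 1 - 2 * (i - 1))) else 0)"
proof (cases i)
  case 0
  then show ?thesis using coefA_caseA[OF q H x, of m] by simp
next
  case (Suc s)
  show ?thesis
  proof (cases "2 * i \<le> m")
    case True
    then obtain r where r: "m = 2 * Suc s + r" using Suc le_Suc_ex by blast
    show ?thesis using coefA_caseB[OF q H x r] True Suc by simp
  next
    case False
    then have m: "m = 2 * s + 1" using i Suc by simp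
    show ?thesis using coefA_caseC[OF q H m, of x] False Suc by simp
  qed
qed

lemma sum_shift0: "(\<Sum>i\<in>{0..K::nat}. f i) = f 0 + (\<Sum>j<K. f (Suc j))"
proof (cases K)
  case 0 then show ?thesis by simp
next
  case (Suc n)
  have "{0..K} = {..Suc n}" using Suc by auto
  moreover have "{..<K} = {..n}" using Suc by auto
  ultimately show ?thesis by (simp only: sum.atMost_Suc_shift)
qed

lemma coef_a_0_0: "0 < q \<Longrightarrow> coef_a q \<nu> 0 0 = 1"
  unfolding coef_a_def by (simp add: qpoch_def qpow_def)

lemma main:
  assumes q: "0 < q" "q < 1"
  shows "\<forall>\<nu> x. (\<forall>i::nat. qpow q (2 * \<nu> + 2 * of_nat i) \<noteq> 1) \<longrightarrow> 0 < x \<longrightarrow>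
    hahn_exton q (\<nu> + of_nat m) (x * q ^ m) =
           (\<Sum>i\<in>{0..m div 2}. coef_a q \<nu> m i / complex_of_real (x ^ (m - 2 * i)) *
                                hahn_exton q \<nu> (x * q ^ i))
         + (\<Sum>j<(m + 1) div 2. coef_b q \<nu> m j / complex_of_real (x ^ (m - 1 - 2 * j)) *
                                hahn_exton q (\<nu> - 1) (x * q ^ j))"
proof (induction m)
  case 0
  show ?case using coef_a_0_0[OF q(1)] by simp
next
  case (Suc m)
  show ?case
  proof (intro allI impI)
    fix \<nu> :: complex and x :: real
    assume H: "\<forall>i::nat. qpow q (2 * \<nu> + 2 * of_nat i) \<noteq> 1" and x: "0 < x"
    have H1: "\<forall>i::nat. qpow q (2 * (\<nu> + 1) + 2 * of_nat i) \<noteq> 1"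
    proof
      fix i :: nat
      have "2 * (\<nu> + 1) + 2 * of_nat i = 2 * \<nu> + 2 * of_nat (Suc i)" by (simp add: algebra_simps)
      then show "qpow q (2 * (\<nu> + 1) + 2 * of_nat i) \<noteq> 1" using H by metis
    qed
    have xq: "0 < x * q" using x q by simp
    define J0 where "J0 = (\<lambda>i::nat. hahn_exton q \<nu> (x * q ^ i))"
    define Jm where "Jm = (\<lambda>i::nat. hahn_exton q (\<nu> - 1) (x * q ^ i))"
    define A0 where "A0 = coef_a q \<nu> 1 0"
    define B0 where "B0 = coef_b q \<nu> 1 0"
    define al where "al = (\<lambda>i. coef_a q (\<nu> + 1) m i / complex_of_real ((x * q) ^ (m - 2 * i)) * (A0 / complex_of_real (x * q ^ i)))"
    define be where "be = (\<lambda>j. coef_b q (\<nu> + 1) m j / complex_of_real ((x * q) ^ (m - 1 - 2 * j)))"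
    have IH: "hahn_exton q (\<nu> + 1 + of_nat m) (x * q * q ^ m) =
           (\<Sum>i\<in>{0..m div 2}. coef_a q (\<nu> + 1) m i / complex_of_real ((x * q) ^ (m - 2 * i)) *
                                hahn_exton q (\<nu> + 1) (x * q * q ^ i))
         + (\<Sum>j<(m + 1) div 2. coef_b q (\<nu> + 1) m j / complex_of_real ((x * q) ^ (m - 1 - 2 * j)) *
                                hahn_exton q (\<nu> + 1 - 1) (x * q * q ^ j))"
      using Suc.IH H1 xq by blast
    have base: "hahn_exton q (\<nu> + 1) (x * q * q ^ i) = A0 / complex_of_real (x * q ^ i) * J0 i + B0 * Jm i" for i
    proof -
      have e: "x * q * q ^ i = (x * q ^ i) * q" by simp
      have "0 < x * q ^ i" using x q by simp
      then show ?thesis unfolding e A0_def B0_def J0_def Jm_def using J_base[OF q, of "x * q ^ i" \<nu>] by simp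
    qed
    have sh: "hahn_exton q (\<nu> + 1 - 1) (x * q * q ^ j) = J0 (Suc j)" for j
      unfolding J0_def by (simp add: mult.assoc)
    have LHS: "hahn_exton q (\<nu> + of_nat (Suc m)) (x * q ^ Suc m) = hahn_exton q (\<nu> + 1 + of_nat m) (x * q * q ^ m)"
      by (simp add: algebra_simps)
    have eq1: "hahn_exton q (\<nu> + of_nat (Suc m)) (x * q ^ Suc m) =
       (\<Sum>i\<in>{0..m div 2}. al i * J0 i) + (\<Sum>i\<in>{0..m div 2}. coef_a q (\<nu> + 1) m i / complex_of_real ((x * q) ^ (m - 2 * i)) * B0 * Jm i)
       + (\<Sum>j<(m + 1) div 2. be j * J0 (Suc j))"
      unfolding LHS IH base sh
    proof -
      have d: "\<And>c a J b K. (c::complex) * (a * J + b * K) = c * a * J + c * b * K" by (simp add: distrib_left mult.assoc)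
      have "(\<Sum>i\<in>{0..m div 2}. coef_a q (\<nu> + 1) m i / complex_of_real ((x * q) ^ (m - 2 * i)) *
              (A0 / complex_of_real (x * q ^ i) * J0 i + B0 * Jm i)) =
            (\<Sum>i\<in>{0..m div 2}. al i * J0 i + coef_a q (\<nu> + 1) m i / complex_of_real ((x * q) ^ (m - 2 * i)) * B0 * Jm i)"
        unfolding al_def d ..
      then show "(\<Sum>i\<in>{0..m div 2}. coef_a q (\<nu> + 1) m i / complex_of_real ((x * q) ^ (m - 2 * i)) *
              (A0 / complex_of_real (x * q ^ i) * J0 i + B0 * Jm i)) +
            (\<Sum>j<(m + 1) div 2. coef_b q (\<nu> + 1) m j / complex_of_real ((x * q) ^ (m - 1 - 2 * j)) * J0 (Suc j)) =
          (\<Sum>i\<in>{0..m div 2}. al i * J0 i) + (\<Sum>i\<in>{0..m div 2}. coef_a q (\<nu> + 1) m i / complex_of_real ((x * q) ^ (m - 2 * i)) * B0 * Jm i)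
          + (\<Sum>j<(m + 1) div 2. be j * J0 (Suc j))"
        unfolding be_def sum.distrib by simp
    qed
    have bpart: "(\<Sum>i\<in>{0..m div 2}. coef_a q (\<nu> + 1) m i / complex_of_real ((x * q) ^ (m - 2 * i)) * B0 * Jm i)
       = (\<Sum>j<(Suc m + 1) div 2. coef_b q \<nu> (Suc m) j / complex_of_real (x ^ (Suc m - 1 - 2 * j)) * Jm j)"
    proof -
      have "{..<(Suc m + 1) div 2} = {0..m div 2}" by auto
      moreover have "coef_b q \<nu> (Suc m) j / complex_of_real (x ^ (Suc m - 1 - 2 * j)) =
         coef_a q (\<nu> + 1) m j / complex_of_real ((x * q) ^ (m - 2 * j)) * B0" if "j \<in> {0..m div 2}" for j
        unfolding B0_def by (rule coefB_step[OF q x]) (use that in auto)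
      ultimately show ?thesis by (intro sum.cong) auto
    qed
    have apart: "(\<Sum>i\<in>{0..m div 2}. al i * J0 i) + (\<Sum>j<(m + 1) div 2. be j * J0 (Suc j)) =
      (\<Sum>i\<in>{0..Suc m div 2}. coef_a q \<nu> (Suc m) i / complex_of_real (x ^ (Suc m - 2 * i)) * J0 i)"
    proof -
      have "(\<Sum>i\<in>{0..Suc m div 2}. coef_a q \<nu> (Suc m) i / complex_of_real (x ^ (Suc m - 2 * i)) * J0 i)
         = (\<Sum>i\<in>{0..Suc m div 2}. (if 2 * i \<le> m then al i * J0 i else 0) + (if 1 \<le> i then be (i - 1) * J0 i else 0))"
      proof (rule sum.cong[OF refl])
        fix i assume "i \<in> {0..Suc m div 2}"
        then have "2 * i \<le> Suc m" by auto
        from coefA_step[OF q H x this] show "coef_a q \<nu> (Suc m) i / complex_of_real (x ^ (Suc m - 2 * i)) * J0 i =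
          (if 2 * i \<le> m then al i * J0 i else 0) + (if 1 \<le> i then be (i - 1) * J0 i else 0)"
          unfolding al_def be_def A0_def by (simp add: distrib_right)
      qed
      also have "\<dots> = (\<Sum>i\<in>{0..Suc m div 2}. (if 2 * i \<le> m then al i * J0 i else 0)) +
                      (\<Sum>i\<in>{0..Suc m div 2}. (if 1 \<le> i then be (i - 1) * J0 i else 0))"
        by (rule sum.distrib)
      also have "(\<Sum>i\<in>{0..Suc m div 2}. (if 2 * i \<le> m then al i * J0 i else 0)) = (\<Sum>i\<in>{0..m div 2}. al i * J0 i)"
      proof -
        have "(\<Sum>i\<in>{0..Suc m div 2}. (if 2 * i \<le> m then al i * J0 i else 0)) =
              (\<Sum>i\<in>{0..m div 2}. (if 2 * i \<le> m then al i * J0 i else 0))"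
        proof (rule sum.mono_neutral_right)
          show "finite {0..Suc m div 2}" by simp
          show "{0..m div 2} \<subseteq> {0..Suc m div 2}" by (auto intro: div_le_mono order_trans)
          show "\<forall>i\<in>{0..Suc m div 2} - {0..m div 2}. (if 2 * i \<le> m then al i * J0 i else 0) = 0"
          proof
            fix i assume "i \<in> {0..Suc m div 2} - {0..m div 2}"
            then have "m div 2 < i" by auto
            then have "\<not> 2 * i \<le> m" by linarith
            then show "(if 2 * i \<le> m then al i * J0 i else 0) = 0" by simp
          qed
        qed
        also have "\<dots> = (\<Sum>i\<in>{0..m div 2}. al i * J0 i)"
        proof (rule sum.cong[OF refl])
          fix i assume "i \<in> {0..m div 2}"
          then have "2 * i \<le> m" by auto
          then show "(if 2 * i \<le> m then al i * J0 i else 0) = al i * J0 i" by simp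
        qed
        finally show ?thesis .
      qed
      also have "(\<Sum>i\<in>{0..Suc m div 2}. (if 1 \<le> i then be (i - 1) * J0 i else 0)) = (\<Sum>j<(m + 1) div 2. be j * J0 (Suc j))"
        unfolding sum_shift0 by simp
      finally show ?thesis by simp
    qed
    show "hahn_exton q (\<nu> + of_nat (Suc m)) (x * q ^ Suc m) =
           (\<Sum>i\<in>{0..Suc m div 2}. coef_a q \<nu> (Suc m) i / complex_of_real (x ^ (Suc m - 2 * i)) *
                                hahn_exton q \<nu> (x * q ^ i))
         + (\<Sum>j<(Suc m + 1) div 2. coef_b q \<nu> (Suc m) j / complex_of_real (x ^ (Suc m - 1 - 2 * j)) *
                                hahn_exton q (\<nu> - 1) (x * q ^ j))"
    proof -
      have G: "hahn_exton q (\<nu> + of_nat (Suc m)) (x * q ^ Suc m) =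
        (\<Sum>i\<in>{0..Suc m div 2}. coef_a q \<nu> (Suc m) i / complex_of_real (x ^ (Suc m - 2 * i)) * J0 i) +
        (\<Sum>j<(Suc m + 1) div 2. coef_b q \<nu> (Suc m) j / complex_of_real (x ^ (Suc m - 1 - 2 * j)) * Jm j)"
        unfolding eq1 bpart apart[symmetric] by (simp only: add.assoc add.commute add.left_commute)
      then show ?thesis by (simp only: J0_def Jm_def)
    qed
  qed
qed

theorem lemma4p4:
  fixes q :: real and \<nu> :: complex and m :: nat and x :: real
  assumes "0 < q" and "q < 1"
    and "\<forall>i::nat. qpow q (2 * \<nu> + 2 * of_nat i) \<noteq> 1"
    and "0 < x"
  shows "hahn_exton q (\<nu> + of_nat m) (x * q ^ m) =
           (\<Sum>i\<in>{0..m div 2}. coef_a q \<nu> m i / complex_of_real (x ^ (m - 2 * i)) *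
                                hahn_exton q \<nu> (x * q ^ i))
         + (\<Sum>j<(m + 1) div 2. coef_b q \<nu> m j / complex_of_real (x ^ (m - 1 - 2 * j)) *
                                hahn_exton q (\<nu> - 1) (x * q ^ j))"
  using main[OF assms(1,2), of m] assms(3,4) by blast

end
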